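(* Let $E\to X$ be a rank $n$ vector bundle on a nonsingular variety $X$ over an algebraically closed field, let $\nu=(\nu_1>\cdots>\nu_k>0)$ be a strict partition with $k\le n$, and set $\lambda=\nu0^{n-k}=(\nu_1,\dots,\nu_k,0,\dots,0)$. Then $$P_\lambda(E;t)=(\tau_E^k)_*\Bigl(x_1^{\nu_1}\cdots x_k^{\nu_k}\prod_{1\le i<j\le n,\ i\le k}(x_i-tx_j)\Bigr).$$
   Context: $t$ is an indeterminate, push-forwards act coefficientwise in $t$. For a sequence $\lambda$ of $n$ nonnegative integers, $R_\lambda(E;t)=(\tau_E)_*\bigl(x_1^{\lambda_1}\cdots x_n^{\lambda_n}\prod_{i<j}(x_i-tx_j)\bigr)$, where $\tau_E:Fl(E)\to X$ is the complete flag bundle of quotients of ranks $n,\dots,1$ and $(\tau_E)_*f(x)=\sum_{w\in S_n}w\bigl(f(y)/\prod_{i<j}(y_i-y_j)\bigr)$ evaluated at the Chern roots of $E$. $v_m(t)=\prod_{i=1}^m\frac{1-t^i}{1-t}$, $v_\lambda(t)=\prod_iv_{m_i}(t)$ where $m_i$ are the sizes of the level sets of $\lambda$, and $P_\lambda(E;t)=R_\lambda(E;t)/v_\lambda(t)$. $\tau_E^k:Fl^k(E)\to X$ is the flag bundle parametrizing flags of quotients of $E$ of ranks $k,k-1,\dots,1$, and for a polynomial $f$ symmetric in $y_{k+1},\dots,y_n$, $(\tau^k_E)_*f(x)=\sum_{w\in S_n/S_{n-k}}w\bigl(f(y)/\prod_{i<j,\,i\le k}(y_i-y_j)\bigr)$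 evaluated at the Chern roots of $E$. *)

theory Defs
  imports "HOL-Combinatorics.Permutations"
begin

text \<open>Chern roots are modelled as pairwise distinct elements y 0, ..., y (n-1) of a field
  of characteristic 0; variables are indexed from 0. A permutation w acts by
  (w f)(y) = f (y o w).\<close>

definition perms :: "nat \<Rightarrow> (nat \<Rightarrow> nat) set" where
  "perms n = {w. w permutes {..<n}}"

definition gysin_full ::
  "nat \<Rightarrow> ((nat \<Rightarrow> 'a::field) \<Rightarrow> 'a) \<Rightarrow> (nat \<Rightarrow> 'a) \<Rightarrow> 'a" where
  "gysin_full n f y =
     (\<Sum>w\<in>perms n. f (y \<circ> w) /
        (\<Prod>i<n. \<Prod>j\<in>{i<..<n}. (y (w i) - y (w j))))"

text \<open>Partial flag bundle push-forward: sum over the cosets w S_{n-k} of S_n/S_{n-k},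
  where S_{n-k} permutes the last n-k indices. A coset is determined by the restriction
  of w to the first k indices; we evaluate at a chosen representative (well defined
  for f symmetric in the last n-k variables).\<close>
definition cosets_k :: "nat \<Rightarrow> nat \<Rightarrow> (nat \<Rightarrow> nat) set" where
  "cosets_k n k = (\<lambda>w. restrict w {..<k}) ` perms n"

definition coset_rep :: "nat \<Rightarrow> nat \<Rightarrow> (nat \<Rightarrow> nat) \<Rightarrow> (nat \<Rightarrow> nat)" where
  "coset_rep n k c = (SOME w. w \<in> perms n \<and> restrict w {..<k} = c)"

definition gysin_partial ::
  "nat \<Rightarrow> nat \<Rightarrow> ((nat \<Rightarrow> 'a::field) \<Rightarrow> 'a) \<Rightarrow> (nat \<Rightarrow> 'a) \<Rightarrow> 'a" where
  "gysin_partial n k f y =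
     (\<Sum>c\<in>cosets_k n k. let w = coset_rep n k c in
        f (y \<circ> w) / (\<Prod>i<k. \<Prod>j\<in>{i<..<n}. (y (w i) - y (w j))))"

definition R_poly :: "nat list \<Rightarrow> 'a::field \<Rightarrow> (nat \<Rightarrow> 'a) \<Rightarrow> 'a" where
  "R_poly lam t y = gysin_full (length lam)
     (\<lambda>x. (\<Prod>i<length lam. x i ^ (lam ! i)) *
          (\<Prod>i<length lam. \<Prod>j\<in>{i<..<length lam}. (x i - t * x j))) y"

text \<open>v_m(t) = prod_{i=1}^m (1-t^i)/(1-t), written with (1-t^i)/(1-t) = sum_{j<i} t^j.\<close>
definition v_m :: "nat \<Rightarrow> 'a::field \<Rightarrow> 'a" where
  "v_m m t = (\<Prod>i\<in>{1..m}. \<Sum>j<i. t ^ j)"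

definition v_lam :: "nat list \<Rightarrow> 'a::field \<Rightarrow> 'a" where
  "v_lam lam t = (\<Prod>a\<in>set lam. v_m (count_list lam a) t)"

definition P_poly :: "nat list \<Rightarrow> 'a::field \<Rightarrow> (nat \<Rightarrow> 'a) \<Rightarrow> 'a" where
  "P_poly lam t y = R_poly lam t y / v_lam lam t"

end

theory Submission
  imports Defs "HOL-Combinatorics.Multiset_Permutations"
begin


definition TT :: "(nat \<Rightarrow> 'a::field) \<Rightarrow> 'a \<Rightarrow> nat set \<Rightarrow> nat \<Rightarrow> 'a" where
  "TT z t A a = (\<Prod>j\<in>A-{a}. (z a - t * z j) / (z a - z j))"

lemma ID_lemma:
  fixes z :: "nat \<Rightarrow> 'a::field"
  assumes "finite A" "inj_on z A"
  shows "\<forall>u. u * (1 - t) * (\<Sum>a\<in>A. TT z t A a * (\<Prod>j\<in>A-{a}. (u - z j)))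
            = (\<Prod>j\<in>A. (u - t * z j)) - t ^ card A * (\<Prod>j\<in>A. (u - z j))"
  using assms
proof (induction A rule: finite_induct)
  case empty
  then show ?case by simp
next
  case (insert b A)
  have inj: "inj_on z A" using insert.prems by (simp add: inj_on_insert)
  have zb: "\<And>a. a \<in> A \<Longrightarrow> z b \<noteq> z a" using insert.prems insert.hyps by (auto simp: inj_on_def)
  have IH: "\<And>u. u * (1 - t) * (\<Sum>a\<in>A. TT z t A a * (\<Prod>j\<in>A-{a}. (u - z j)))
            = (\<Prod>j\<in>A. (u - t * z j)) - t ^ card A * (\<Prod>j\<in>A. (u - z j))"
    using insert.IH inj by blast
  define m where "m = card A"
  define S where "S u = (\<Sum>a\<in>A. TT z t A a * (\<Prod>j\<in>A-{a}. (u - z j)))" for u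
  define Pt where "Pt u = (\<Prod>j\<in>A. (u - t * z j))" for u
  define P1 where "P1 u = (\<Prod>j\<in>A. (u - z j))" for u
  define K where "K = (\<Sum>a\<in>A. TT z t A a / (z b - z a))"
  have P1a: "a \<in> A \<Longrightarrow> P1 u = (u - z a) * (\<Prod>j\<in>A-{a}. (u - z j))" for a u
    unfolding P1_def using insert.hyps(1) by (simp add: prod.remove)
  have P1nz: "P1 (z b) \<noteq> 0" unfolding P1_def using zb insert.hyps(1) by (auto simp: prod_zero_iff)
  have Szb: "S (z b) = P1 (z b) * K"
    unfolding S_def K_def sum_distrib_left
  proof (rule sum.cong[OF refl])
    fix a assume a: "a \<in> A"
    show "TT z t A a * (\<Prod>j\<in>A-{a}. (z b - z j)) = P1 (z b) * (TT z t A a / (z b - z a))"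
      unfolding P1a[OF a, of "z b"] using zb[OF a] by (simp add: field_simps)
  qed
  have Tb: "TT z t (insert b A) b = t ^ m + z b * (1 - t) * K"
  proof -
    have "TT z t (insert b A) b = Pt (z b) / P1 (z b)"
      unfolding TT_def Pt_def P1_def using insert.hyps by (simp add: prod_dividef)
    also have "Pt (z b) = z b * (1 - t) * S (z b) + t ^ m * P1 (z b)"
      using IH[of "z b"] unfolding S_def Pt_def P1_def m_def by (simp add: algebra_simps)
    also have "\<dots> = P1 (z b) * (t ^ m + z b * (1 - t) * K)" using Szb by (simp add: algebra_simps)
    finally show ?thesis using P1nz by simp
  qed
  have Ta: "a \<in> A \<Longrightarrow> TT z t (insert b A) a = TT z t A a * ((z a - t * z b) / (z a - z b))" for a
  proof -
    assume a: "a \<in> A"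
    have "insert b A - {a} = insert b (A - {a})" using a insert.hyps by auto
    then show ?thesis unfolding TT_def using insert.hyps by (simp add: mult.commute)
  qed
  have Pa: "a \<in> A \<Longrightarrow> (\<Prod>j\<in>insert b A - {a}. (u - z j)) = (u - z b) * (\<Prod>j\<in>A-{a}. (u - z j))" for a u
  proof -
    assume a: "a \<in> A"
    have "insert b A - {a} = insert b (A - {a})" using a insert.hyps by auto
    then show ?thesis using insert.hyps by simp
  qed
  have key: "(\<Sum>a\<in>A. TT z t (insert b A) a * (\<Prod>j\<in>insert b A-{a}. (u - z j)))
       = (u - t * z b) * S u - z b * (1 - t) * P1 u * K" for u
  proof -
    have "(\<Sum>a\<in>A. TT z t (insert b A) a * (\<Prod>j\<in>insert b A-{a}. (u - z j)))
        = (\<Sum>a\<in>A. (u - t * z b) * (TT z t A a * (\<Prod>j\<in>A-{a}. (u - z j))) - z b * (1 - t) * P1 u * (TT z t A a / (z b - z a)))"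
    proof (rule sum.cong[OF refl])
      fix a assume a: "a \<in> A"
      have ne: "z a - z b \<noteq> 0" "z b - z a \<noteq> 0" using zb[OF a] by auto
      show "TT z t (insert b A) a * (\<Prod>j\<in>insert b A-{a}. (u - z j)) =
          (u - t * z b) * (TT z t A a * (\<Prod>j\<in>A-{a}. (u - z j))) - z b * (1 - t) * P1 u * (TT z t A a / (z b - z a))"
        unfolding Ta[OF a] Pa[OF a] P1a[OF a, of u] using ne
        by (simp add: field_simps)
    qed
    also have "\<dots> = (u - t * z b) * S u - z b * (1 - t) * P1 u * K"
      unfolding S_def K_def by (simp add: sum_subtractf sum_distrib_left)
    finally show ?thesis .
  qed
  show ?case
  proof
    fix u
    have "(\<Sum>a\<in>insert b A. TT z t (insert b A) a * (\<Prod>j\<in>insert b A-{a}. (u - z j)))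
        = TT z t (insert b A) b * P1 u + ((u - t * z b) * S u - z b * (1 - t) * P1 u * K)"
      using insert.hyps key[of u] unfolding P1_def by simp
    also have "\<dots> = (u - t * z b) * S u + t ^ m * P1 u" unfolding Tb by (simp add: algebra_simps)
    finally have e: "(\<Sum>a\<in>insert b A. TT z t (insert b A) a * (\<Prod>j\<in>insert b A-{a}. (u - z j)))
       = (u - t * z b) * S u + t ^ m * P1 u" .
    have IHu: "u * (1 - t) * S u = Pt u - t ^ m * P1 u" using IH[of u] unfolding S_def Pt_def P1_def m_def .
    have "u * (1 - t) * ((u - t * z b) * S u + t ^ m * P1 u) = (u - t * z b) * Pt u - t ^ Suc m * ((u - z b) * P1 u)"
    proof -
      have "u * (1 - t) * ((u - t * z b) * S u + t ^ m * P1 u) = (u - t * z b) * (u * (1 - t) * S u) + u * (1 - t) * t ^ m * P1 u"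
        by (simp add: algebra_simps)
      also have "\<dots> = (u - t * z b) * (Pt u - t ^ m * P1 u) + u * (1 - t) * t ^ m * P1 u" using IHu by simp
      also have "\<dots> = (u - t * z b) * Pt u - t ^ Suc m * ((u - z b) * P1 u)" by (simp add: algebra_simps)
      finally show ?thesis .
    qed
    then show "u * (1 - t) * (\<Sum>a\<in>insert b A. TT z t (insert b A) a * (\<Prod>j\<in>insert b A-{a}. (u - z j)))
            = (\<Prod>j\<in>insert b A. (u - t * z j)) - t ^ card (insert b A) * (\<Prod>j\<in>insert b A. (u - z j))"
      using e insert.hyps unfolding Pt_def P1_def m_def by simp
  qed
qed

lemma TB_lemma:
  fixes z :: "nat \<Rightarrow> 'a::field"
  assumes fin: "finite A" and inj: "inj_on z (insert b A)" and bA: "b \<notin> A"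
  shows "TT z t (insert b A) b = t ^ card A + z b * (1 - t) * (\<Sum>a\<in>A. TT z t A a / (z b - z a))"
proof -
  have injA: "inj_on z A" using inj by (simp add: inj_on_insert)
  have zb: "\<And>a. a \<in> A \<Longrightarrow> z b \<noteq> z a" using inj bA by (auto simp: inj_on_def)
  define m where "m = card A"
  define S where "S u = (\<Sum>a\<in>A. TT z t A a * (\<Prod>j\<in>A-{a}. (u - z j)))" for u
  define Pt where "Pt u = (\<Prod>j\<in>A. (u - t * z j))" for u
  define P1 where "P1 u = (\<Prod>j\<in>A. (u - z j))" for u
  define K where "K = (\<Sum>a\<in>A. TT z t A a / (z b - z a))"
  have IH: "\<And>u. u * (1 - t) * S u = Pt u - t ^ m * P1 u"
    using ID_lemma[OF fin injA] unfolding S_def Pt_def P1_def m_def by blast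
  have P1a: "a \<in> A \<Longrightarrow> P1 u = (u - z a) * (\<Prod>j\<in>A-{a}. (u - z j))" for a u
    unfolding P1_def using fin by (simp add: prod.remove)
  have P1nz: "P1 (z b) \<noteq> 0" unfolding P1_def using zb fin by (auto simp: prod_zero_iff)
  have Szb: "S (z b) = P1 (z b) * K"
    unfolding S_def K_def sum_distrib_left
  proof (rule sum.cong[OF refl])
    fix a assume a: "a \<in> A"
    show "TT z t A a * (\<Prod>j\<in>A-{a}. (z b - z j)) = P1 (z b) * (TT z t A a / (z b - z a))"
      unfolding P1a[OF a, of "z b"] using zb[OF a] by (simp add: field_simps)
  qed
  have "TT z t (insert b A) b = Pt (z b) / P1 (z b)"
    unfolding TT_def Pt_def P1_def using fin bA by (simp add: prod_dividef)
  also have "Pt (z b) = z b * (1 - t) * S (z b) + t ^ m * P1 (z b)"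
    using IH[of "z b"] by (simp add: algebra_simps)
  also have "\<dots> = P1 (z b) * (t ^ m + z b * (1 - t) * K)" using Szb by (simp add: algebra_simps)
  finally show ?thesis using P1nz unfolding K_def m_def by simp
qed

lemma L_lemma:
  fixes z :: "nat \<Rightarrow> 'a::field"
  assumes "finite A" "inj_on z A"
  shows "(\<Sum>a\<in>A. TT z t A a) = (\<Sum>r<card A. t ^ r)"
  using assms
proof (induction A rule: finite_induct)
  case empty
  then show ?case by simp
next
  case (insert b A)
  have injA: "inj_on z A" using insert.prems by (simp add: inj_on_insert)
  have zb: "\<And>a. a \<in> A \<Longrightarrow> z b \<noteq> z a" using insert.prems insert.hyps by (auto simp: inj_on_def)
  define K where "K = (\<Sum>a\<in>A. TT z t A a / (z b - z a))"
  have Ta: "a \<in> A \<Longrightarrow> TT z t (insert b A) a = TT z t A a - z b * (1 - t) * (TT z t A a / (z b - z a))" for a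
  proof -
    assume a: "a \<in> A"
    have "insert b A - {a} = insert b (A - {a})" using a insert.hyps by auto
    then have "TT z t (insert b A) a = TT z t A a * ((z a - t * z b) / (z a - z b))"
      unfolding TT_def using insert.hyps by (simp add: mult.commute)
    also have "\<dots> = TT z t A a - z b * (1 - t) * (TT z t A a / (z b - z a))"
      using zb[OF a] by (simp add: field_simps)
    finally show ?thesis .
  qed
  have "(\<Sum>a\<in>insert b A. TT z t (insert b A) a) = TT z t (insert b A) b + (\<Sum>a\<in>A. TT z t (insert b A) a)"
    using insert.hyps by simp
  also have "(\<Sum>a\<in>A. TT z t (insert b A) a) = (\<Sum>a\<in>A. TT z t A a) - z b * (1 - t) * K"
    unfolding K_def using Ta by (simp add: sum_subtractf sum_distrib_left)
  also have "TT z t (insert b A) b = t ^ card A + z b * (1 - t) * K"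
    unfolding K_def by (rule TB_lemma[OF insert.hyps(1) insert.prems insert.hyps(2)])
  finally show ?case using insert injA by simp
qed




fun macp :: "(nat \<Rightarrow> 'a::field) \<Rightarrow> 'a \<Rightarrow> nat list \<Rightarrow> 'a" where
  "macp z t [] = 1"
| "macp z t (a # xs) = (\<Prod>b\<in>set xs. (z a - t * z b) / (z a - z b)) * macp z t xs"

lemma macp_sum:
  fixes z :: "nat \<Rightarrow> 'a::field"
  assumes "finite B" "inj_on z B"
  shows "(\<Sum>xs\<in>permutations_of_set B. macp z t xs) = v_m (card B) t"
  using assms
proof (induction "card B" arbitrary: B)
  case 0
  then have "B = {}" by simp
  then show ?case by (simp add: v_m_def)
next
  case (Suc m)
  then have ne: "B \<noteq> {}" by auto
  have IH: "a \<in> B \<Longrightarrow> (\<Sum>xs\<in>permutations_of_set (B - {a}). macp z t xs) = v_m m t" for a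
  proof -
    assume a: "a \<in> B"
    have "inj_on z (B - {a})" using Suc.prems(2) by (rule inj_on_subset) auto
    moreover have "m = card (B - {a})" using a Suc.hyps(2) Suc.prems(1) by simp
    ultimately show ?thesis using Suc.hyps(1)[of "B - {a}"] Suc.prems(1) by simp
  qed
  have "(\<Sum>xs\<in>permutations_of_set B. macp z t xs)
      = (\<Sum>a\<in>B. \<Sum>xs\<in>(\<lambda>xs. a # xs) ` permutations_of_set (B - {a}). macp z t xs)"
    unfolding permutations_of_set_nonempty[OF ne]
    by (rule sum.UNION_disjoint) (use Suc.prems in auto)
  also have "\<dots> = (\<Sum>a\<in>B. \<Sum>xs\<in>permutations_of_set (B - {a}). macp z t (a # xs))"
    by (rule sum.cong[OF refl], subst sum.reindex) (auto simp: inj_on_def)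
  also have "\<dots> = (\<Sum>a\<in>B. TT z t B a * (\<Sum>xs\<in>permutations_of_set (B - {a}). macp z t xs))"
    by (rule sum.cong[OF refl]) (auto simp: sum_distrib_left TT_def permutations_of_set_def intro!: sum.cong)
  also have "\<dots> = (\<Sum>a\<in>B. TT z t B a) * v_m m t"
    using IH by (simp add: sum_distrib_right)
  also have "\<dots> = v_m (Suc m) t"
    using L_lemma[OF Suc.prems] Suc.hyps(2)[symmetric] by (simp add: v_m_def mult.commute)
  finally show ?case using Suc.hyps(2) by simp
qed

lemma macp_nth:
  fixes z :: "nat \<Rightarrow> 'a::field"
  assumes "distinct xs"
  shows "macp z t xs = (\<Prod>i<length xs. \<Prod>j\<in>{i<..<length xs}. (z (xs!i) - t * z (xs!j)) / (z (xs!i) - z (xs!j)))"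
  using assms
proof (induction xs)
  case Nil
  then show ?case by simp
next
  case (Cons a xs)
  let ?G = "\<lambda>p q. (z p - t * z q) / (z p - z q)"
  have s1: "{0<..<Suc (length xs)} = Suc ` {..<length xs}" 
    by (auto simp: image_iff) (metis Suc_pred greaterThanLessThan_iff lessThan_iff not_less_eq zero_less_iff_neq_zero)
  have s2: "{Suc i<..<Suc (length xs)} = Suc ` {i<..<length xs}" for i
    by (auto simp: image_iff) (metis Suc_less_eq Suc_pred greaterThanLessThan_iff less_Suc_eq_0_disj not_less0)
  have f0: "(\<Prod>j\<in>{0<..<Suc (length xs)}. ?G a ((a#xs)!j)) = (\<Prod>b\<in>set xs. ?G a b)"
  proof -
    have "(\<Prod>j\<in>{0<..<Suc (length xs)}. ?G a ((a#xs)!j)) = (\<Prod>j<length xs. ?G a (xs!j))"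
      unfolding s1 by (subst prod.reindex) auto
    also have "\<dots> = (\<Prod>b\<in>set xs. ?G a b)"
      using Cons.prems by (simp add: prod.distinct_set_conv_list prod.list_conv_set_nth atLeast0LessThan)
    finally show ?thesis .
  qed
  have "(\<Prod>i<length (a#xs). \<Prod>j\<in>{i<..<length (a#xs)}. ?G ((a#xs)!i) ((a#xs)!j))
     = (\<Prod>j\<in>{0<..<Suc (length xs)}. ?G a ((a#xs)!j)) * (\<Prod>i<length xs. \<Prod>j\<in>{Suc i<..<Suc (length xs)}. ?G (xs!i) ((a#xs)!j))"
    by (simp only: length_Cons prod.lessThan_Suc_shift nth_Cons_0 nth_Cons_Suc)
  also have "(\<Prod>i<length xs. \<Prod>j\<in>{Suc i<..<Suc (length xs)}. ?G (xs!i) ((a#xs)!j))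
      = (\<Prod>i<length xs. \<Prod>j\<in>{i<..<length xs}. ?G (xs!i) (xs!j))"
    unfolding s2 by (rule prod.cong[OF refl], subst prod.reindex) auto
  finally show ?case using Cons f0 by simp
qed




lemma count_list_distinct: "distinct xs \<Longrightarrow> x \<in> set xs \<Longrightarrow> count_list xs x = 1"
  by (induction xs) auto

lemma count_list_replicate: "count_list (replicate m a) x = (if a = x then m else 0)"
  by (induction m) auto

lemma vlam_eq:
  assumes strict: "sorted_wrt (>) nu" and pos: "\<forall>a\<in>set nu. 0 < a"
  shows "v_lam (nu @ replicate m 0) (t::'a::field) = v_m m t"
proof -
  let ?l = "nu @ replicate m 0"
  have dist: "distinct nu" using strict by (induction nu) auto
  have "v_lam ?l t = (\<Prod>a\<in>set ?l. if a = 0 then v_m m t else 1)"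
    unfolding v_lam_def
  proof (rule prod.cong[OF refl])
    fix a assume a: "a \<in> set ?l"
    show "v_m (count_list ?l a) t = (if a = 0 then v_m m t else 1)"
    proof (cases "a = 0")
      case True
      then have "a \<notin> set nu" using pos by auto
      then show ?thesis using True by (simp add: count_list_replicate)
    next
      case False
      then have "a \<in> set nu" using a by auto
      then show ?thesis using False dist by (simp add: count_list_replicate count_list_distinct v_m_def)
    qed
  qed
  also have "\<dots> = (if 0 \<in> set ?l then v_m m t else 1)" by simp
  also have "\<dots> = v_m m t" by (cases m) (auto simp: v_m_def)
  finally show ?thesis .
qed

lemma prod_split_lessThan: "k \<le> n \<Longrightarrow> prod f {..<n} = prod f {..<k} * prod f {k..<(n::nat)}"
proof -
  assume "k \<le> n"
  then have "{..<n} = {..<k} \<union> {k..<n}" by auto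
  then show ?thesis by (simp add: prod.union_disjoint ivl_disj_int)
qed

lemma prod_split_gl: "i < k \<Longrightarrow> k \<le> n \<Longrightarrow> prod f {i<..<n} = prod f {i<..<k} * prod f {k..<(n::nat)}"
proof -
  assume "i < k" "k \<le> n"
  then have "{i<..<n} = {i<..<k} \<union> {k..<n}" by auto
  moreover have "{i<..<k} \<inter> {k..<n} = {}" by auto
  ultimately show ?thesis by (simp add: prod.union_disjoint)
qed

lemma perm_tail_image:
  assumes w: "w \<in> perms n" and kn: "k \<le> n"
  shows "w ` {k..<n} = {..<n} - w ` {..<k}"
proof -
  have p: "w permutes {..<n}" using w by (simp add: perms_def)
  have "{k..<n} = {..<n} - {..<k}" using kn by auto
  moreover have "w ` ({..<n} - {..<k}) = w ` {..<n} - w ` {..<k}"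
    by (rule image_set_diff[OF permutes_inj[OF p]])
  ultimately have "w ` {k..<n} = w ` {..<n} - w ` {..<k}" by simp
  then show ?thesis using permutes_image[OF p] by simp
qed

lemma sym_eq:
  assumes w1: "w1 \<in> perms n" and w2: "w2 \<in> perms n" and kn: "k \<le> n" and ik: "i < k"
    and agree: "\<And>j. j < k \<Longrightarrow> w1 j = w2 j"
  shows "(\<Prod>j\<in>{i<..<n}. h (w1 j)) = (\<Prod>j\<in>{i<..<n}. h (w2 j))"
proof -
  have im: "w1 ` {..<k} = w2 ` {..<k}" using agree by (auto simp: image_iff)
  have tail: "(\<Prod>j\<in>{k..<n}. h (w j)) = (\<Prod>v\<in>{..<n} - w ` {..<k}. h v)" if w: "w \<in> perms n" for w
  proof -
    have p: "w permutes {..<n}" using w by (simp add: perms_def)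
    have "(\<Prod>v\<in>w ` {k..<n}. h v) = (\<Prod>j\<in>{k..<n}. h (w j))"
      by (rule prod.reindex[OF permutes_inj_on[OF p], unfolded o_def])
    then show ?thesis using perm_tail_image[OF w kn] by simp
  qed
  have "(\<Prod>j\<in>{i<..<n}. h (w1 j)) = (\<Prod>j\<in>{i<..<k}. h (w1 j)) * (\<Prod>j\<in>{k..<n}. h (w1 j))"
    by (rule prod_split_gl[OF ik kn])
  also have "(\<Prod>j\<in>{i<..<k}. h (w1 j)) = (\<Prod>j\<in>{i<..<k}. h (w2 j))"
    using agree by (intro prod.cong) auto
  also have "(\<Prod>j\<in>{k..<n}. h (w1 j)) = (\<Prod>j\<in>{k..<n}. h (w2 j))"
    using tail[OF w1] tail[OF w2] im by simp
  also have "(\<Prod>j\<in>{i<..<k}. h (w2 j)) * (\<Prod>j\<in>{k..<n}. h (w2 j)) = (\<Prod>j\<in>{i<..<n}. h (w2 j))"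
    by (rule prod_split_gl[OF ik kn, symmetric])
  finally show ?thesis .
qed

lemma coset_rep_prop:
  assumes "c \<in> cosets_k n k"
  shows "coset_rep n k c \<in> perms n \<and> restrict (coset_rep n k c) {..<k} = c"
proof -
  have "\<exists>w. w \<in> perms n \<and> restrict w {..<k} = c" using assms by (auto simp: cosets_k_def)
  then show ?thesis unfolding coset_rep_def by (rule someI_ex)
qed




lemma shift1: "k \<le> (n::nat) \<Longrightarrow> prod f {k..<n} = (\<Prod>i<n-k. f (k + i))"
  by (rule prod.reindex_bij_witness[where i="\<lambda>i. k + i" and j="\<lambda>x. x - k"]) auto

lemma shift2: "k \<le> (n::nat) \<Longrightarrow> prod f {k+i<..<n} = (\<Prod>j\<in>{i<..<n-k}. f (k + j))"
  by (rule prod.reindex_bij_witness[where i="\<lambda>i. k + i" and j="\<lambda>x. x - k"]) auto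

lemma fiber_sum:
  fixes y :: "nat \<Rightarrow> 'a::field"
  assumes kn: "k \<le> n" and inj: "inj_on y {..<n}" and c: "c \<in> cosets_k n k"
  shows "(\<Sum>w\<in>{w. w \<in> perms n \<and> restrict w {..<k} = c}.
            \<Prod>i\<in>{k..<n}. \<Prod>j\<in>{i<..<n}. (y (w i) - t * y (w j)) / (y (w i) - y (w j)))
         = v_m (n - k) t"
proof -
  obtain w0 where w0: "w0 \<in> perms n" and cw: "c = restrict w0 {..<k}"
    using c by (auto simp: cosets_k_def)
  have p0: "w0 permutes {..<n}" using w0 by (simp add: perms_def)
  define B where "B = {..<n} - w0 ` {..<k}"
  have sub: "w0 ` {..<k} \<subseteq> {..<n}"
  proof
    fix v assume "v \<in> w0 ` {..<k}"
    then obtain x where x: "x < k" "v = w0 x" by auto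
    then show "v \<in> {..<n}" using permutes_in_image[OF p0, of x] kn by simp
  qed
  have cardB: "card B = n - k"
    unfolding B_def using sub kn
    by (simp add: card_Diff_subset card_image permutes_inj_on[OF p0])
  have finB: "finite B" unfolding B_def by simp
  have injB: "inj_on y B" using inj unfolding B_def by (rule inj_on_subset) auto
  have fib: "w \<in> {w. w \<in> perms n \<and> restrict w {..<k} = c} \<longleftrightarrow> w \<in> perms n \<and> (\<forall>i<k. w i = w0 i)" for w
    unfolding cw by (auto simp: restrict_def fun_eq_iff)
  define build where "build xs = (\<lambda>m. if m < k then w0 m else if m < n then xs ! (m - k) else m)" for xs :: "nat list"
  define Mw where "Mw w = (\<Prod>i\<in>{k..<n}. \<Prod>j\<in>{i<..<n}. (y (w i) - t * y (w j)) / (y (w i) - y (w j)))" for w :: "nat \<Rightarrow> nat"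
  have "(\<Sum>w\<in>{w. w \<in> perms n \<and> restrict w {..<k} = c}. Mw w) = (\<Sum>xs\<in>permutations_of_set B. macp y t xs)"
  proof (rule sum.reindex_bij_witness[where i=build and j="\<lambda>w. map w [k..<n]"])
    fix w assume "w \<in> {w. w \<in> perms n \<and> restrict w {..<k} = c}"
    then have w: "w \<in> perms n" and ag: "\<And>i. i < k \<Longrightarrow> w i = w0 i" using fib by auto
    have pw: "w permutes {..<n}" using w by (simp add: perms_def)
    show "build (map w [k..<n]) = w"
    proof
      fix m show "build (map w [k..<n]) m = w m"
        using ag permutes_not_in[OF pw, of m] by (auto simp: build_def)
    qed
    have im: "w ` {..<k} = w0 ` {..<k}" using ag by (auto simp: image_iff)
    have dist: "distinct (map w [k..<n])"
      using permutes_inj_on[OF pw] by (simp add: distinct_map)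
    have "set (map w [k..<n]) = B" using perm_tail_image[OF w kn] im by (simp add: B_def)
    then show "map w [k..<n] \<in> permutations_of_set B" using dist by auto
    have "macp y t (map w [k..<n]) = (\<Prod>i<n-k. \<Prod>j\<in>{i<..<n-k}. (y (w (k+i)) - t * y (w (k+j))) / (y (w (k+i)) - y (w (k+j))))"
      using dist by (auto simp: macp_nth intro!: prod.cong)
    also have "\<dots> = Mw w" unfolding Mw_def using kn
      by (simp add: shift1 shift2)
    finally show "macp y t (map w [k..<n]) = Mw w" .
  next
    fix xs assume xs: "xs \<in> permutations_of_set B"
    then have sx: "set xs = B" and dx: "distinct xs" by (auto dest: permutations_of_setD)
    have len: "length xs = n - k" using distinct_card[OF dx] sx cardB by simp
    show "map (build xs) [k..<n] = xs"
      by (rule nth_equalityI) (auto simp: len build_def)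
    have inj_b: "inj_on (build xs) {..<n}"
    proof (rule inj_onI)
      fix a b assume a: "a \<in> {..<n}" and b: "b \<in> {..<n}" and e: "build xs a = build xs b"
      show "a = b"
      proof (cases "a < k"; cases "b < k")
        assume "a < k" "b < k"
        then show ?thesis using e permutes_inj[OF p0] by (auto simp: build_def inj_def)
      next
        assume ak: "a < k" and bk: "\<not> b < k"
        have "xs ! (b - k) \<in> B" using sx len b bk by auto
        moreover have "build xs b = xs ! (b - k)" using b bk by (simp add: build_def)
        moreover have "build xs a = w0 a" using ak by (simp add: build_def)
        ultimately show ?thesis using e ak by (auto simp: B_def)
      next
        assume ak: "\<not> a < k" and bk: "b < k"
        have "xs ! (a - k) \<in> B" using sx len a ak by auto
        moreover have "build xs a = xs ! (a - k)" using a ak by (simp add: build_def)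
        moreover have "build xs b = w0 b" using bk by (simp add: build_def)
        ultimately have False using e bk unfolding B_def by (metis DiffD2 imageI lessThan_iff)
        then show ?thesis ..
      next
        assume ak: "\<not> a < k" and bk: "\<not> b < k"
        then have "xs ! (a - k) = xs ! (b - k)" using e a b by (simp add: build_def)
        then have "a - k = b - k" using dx len a b ak bk by (simp add: nth_eq_iff_index_eq)
        then show ?thesis using ak bk by simp
      qed
    qed
    have img: "build xs ` {..<n} \<subseteq> {..<n}"
    proof
      fix v assume "v \<in> build xs ` {..<n}"
      then obtain a where a: "a < n" and v: "v = build xs a" by auto
      show "v \<in> {..<n}"
      proof (cases "a < k")
        case True then show ?thesis using v sub by (auto simp: build_def)
      next
        case False
        then have "xs ! (a - k) \<in> B" using sx len a by auto
        then show ?thesis using v a False by (auto simp: build_def B_def)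
      qed
    qed
    have "build xs permutes {..<n}"
    proof (rule bij_imp_permutes)
      show "bij_betw (build xs) {..<n} {..<n}"
        unfolding bij_betw_def using inj_b endo_inj_surj[OF _ img inj_b] by simp
      show "\<And>x. x \<notin> {..<n} \<Longrightarrow> build xs x = x" using kn by (auto simp: build_def)
    qed
    then show "build xs \<in> {w. w \<in> perms n \<and> restrict w {..<k} = c}"
      unfolding fib by (auto simp: perms_def build_def)
  qed
  also have "\<dots> = v_m (n - k) t" using macp_sum[OF finB injB] cardB by simp
  finally show ?thesis unfolding Mw_def .
qed




theorem mainTheorem4:
  fixes n :: nat and nu :: "nat list" and t :: "'a::field_char_0" and y :: "nat \<Rightarrow> 'a"
  assumes strict: "sorted_wrt (>) nu"
    and pos: "\<forall>a\<in>set nu. 0 < a"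
    and kn: "length nu \<le> n"
    and roots: "inj_on y {..<n}"
    and vnz: "v_lam (nu @ replicate (n - length nu) 0) t \<noteq> 0"
  shows "P_poly (nu @ replicate (n - length nu) 0) t y =
         gysin_partial n (length nu)
           (\<lambda>x. (\<Prod>i<length nu. x i ^ (nu ! i)) *
                (\<Prod>i<length nu. \<Prod>j\<in>{i<..<n}. (x i - t * x j))) y"
proof -
  define k where "k = length nu"
  have kn': "k \<le> n" using kn k_def by simp
  define lam where "lam = nu @ replicate (n - k) 0"
  have len: "length lam = n" using kn' by (simp add: lam_def k_def)
  define F :: "(nat \<Rightarrow> 'a) \<Rightarrow> 'a" where
    "F = (\<lambda>x. (\<Prod>i<k. x i ^ (nu ! i)) * (\<Prod>i<k. \<Prod>j\<in>{i<..<n}. (x i - t * x j)))"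
  define Gk where "Gk w = F (y \<circ> w) / (\<Prod>i<k. \<Prod>j\<in>{i<..<n}. (y (w i) - y (w j)))" for w :: "nat \<Rightarrow> nat"
  define Mw where "Mw w = (\<Prod>i\<in>{k..<n}. \<Prod>j\<in>{i<..<n}. (y (w i) - t * y (w j)) / (y (w i) - y (w j)))"
    for w :: "nat \<Rightarrow> nat"
  have vl: "v_lam lam t = v_m (n - k) t" unfolding lam_def by (rule vlam_eq[OF strict pos])
  have R: "R_poly lam t y = (\<Sum>w\<in>perms n. Gk w * Mw w)"
    unfolding R_poly_def gysin_full_def len
  proof (rule sum.cong[OF refl])
    fix w assume w: "w \<in> perms n"
    have e1: "(\<Prod>i<n. (y \<circ> w) i ^ (lam ! i)) = (\<Prod>i<k. y (w i) ^ (nu ! i))"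
    proof -
      have "(\<Prod>i<n. (y \<circ> w) i ^ (lam ! i)) = (\<Prod>i<k. (y \<circ> w) i ^ (lam ! i)) * (\<Prod>i\<in>{k..<n}. (y \<circ> w) i ^ (lam ! i))"
        by (rule prod_split_lessThan[OF kn'])
      also have "(\<Prod>i\<in>{k..<n}. (y \<circ> w) i ^ (lam ! i)) = 1"
        by (rule prod.neutral) (auto simp: lam_def k_def nth_append)
      also have "(\<Prod>i<k. (y \<circ> w) i ^ (lam ! i)) = (\<Prod>i<k. y (w i) ^ (nu ! i))"
        by (rule prod.cong) (auto simp: lam_def k_def nth_append)
      finally show ?thesis by simp
    qed
    have e2: "(\<Prod>i<n. \<Prod>j\<in>{i<..<n}. ((y \<circ> w) i - t * (y \<circ> w) j))
       = (\<Prod>i<k. \<Prod>j\<in>{i<..<n}. (y (w i) - t * y (w j))) * (\<Prod>i\<in>{k..<n}. \<Prod>j\<in>{i<..<n}. (y (w i) - t * y (w j)))"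
      using prod_split_lessThan[OF kn'] by simp
    have e3: "(\<Prod>i<n. \<Prod>j\<in>{i<..<n}. (y (w i) - y (w j)))
       = (\<Prod>i<k. \<Prod>j\<in>{i<..<n}. (y (w i) - y (w j))) * (\<Prod>i\<in>{k..<n}. \<Prod>j\<in>{i<..<n}. (y (w i) - y (w j)))"
      by (rule prod_split_lessThan[OF kn'])
    have e4: "(\<Prod>i\<in>{k..<n}. \<Prod>j\<in>{i<..<n}. (y (w i) - t * y (w j))) / (\<Prod>i\<in>{k..<n}. \<Prod>j\<in>{i<..<n}. (y (w i) - y (w j))) = Mw w"
      unfolding Mw_def by (simp add: prod_dividef)
    show "(\<Prod>i<n. (y \<circ> w) i ^ (lam ! i)) * (\<Prod>i<n. \<Prod>j\<in>{i<..<n}. ((y \<circ> w) i - t * (y \<circ> w) j)) /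
          (\<Prod>i<n. \<Prod>j\<in>{i<..<n}. (y (w i) - y (w j))) = Gk w * Mw w"
      unfolding e1 e2 e3 e4[symmetric] Gk_def F_def by (simp add: o_def)
  qed
  have finP: "finite (perms n)" unfolding perms_def by (rule finite_permutations) simp
  have finC: "finite (cosets_k n k)" unfolding cosets_k_def using finP by simp
  have Gk_eq: "Gk w = Gk r" if w: "w \<in> perms n" and r: "r \<in> perms n" and ag: "\<And>j. j < k \<Longrightarrow> w j = r j" for w r
  proof -
    have a: "(\<Prod>i<k. y (w i) ^ (nu!i)) = (\<Prod>i<k. y (r i) ^ (nu!i))" by (intro prod.cong) (auto simp: ag)
    have b: "(\<Prod>i<k. \<Prod>j\<in>{i<..<n}. (y (w i) - t * y (w j))) = (\<Prod>i<k. \<Prod>j\<in>{i<..<n}. (y (r i) - t * y (r j)))"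
    proof (rule prod.cong[OF refl])
      fix i assume "i \<in> {..<k}"
      then show "(\<Prod>j\<in>{i<..<n}. (y (w i) - t * y (w j))) = (\<Prod>j\<in>{i<..<n}. (y (r i) - t * y (r j)))"
        using sym_eq[OF w r kn' _ ag, of i "\<lambda>v. y (r i) - t * y v"] ag by simp
    qed
    have c: "(\<Prod>i<k. \<Prod>j\<in>{i<..<n}. (y (w i) - y (w j))) = (\<Prod>i<k. \<Prod>j\<in>{i<..<n}. (y (r i) - y (r j)))"
    proof (rule prod.cong[OF refl])
      fix i assume "i \<in> {..<k}"
      then show "(\<Prod>j\<in>{i<..<n}. (y (w i) - y (w j))) = (\<Prod>j\<in>{i<..<n}. (y (r i) - y (r j)))"
        using sym_eq[OF w r kn' _ ag, of i "\<lambda>v. y (r i) - y v"] ag by simp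
    qed
    show ?thesis unfolding Gk_def F_def o_def using a b c by simp
  qed
  have "(\<Sum>w\<in>perms n. Gk w * Mw w)
      = (\<Sum>c\<in>cosets_k n k. \<Sum>w\<in>{w. w \<in> perms n \<and> restrict w {..<k} = c}. Gk w * Mw w)"
    by (rule sum.group[symmetric, OF finP finC]) (auto simp: cosets_k_def)
  also have "\<dots> = (\<Sum>c\<in>cosets_k n k. Gk (coset_rep n k c) * v_m (n - k) t)"
  proof (rule sum.cong[OF refl])
    fix c assume c: "c \<in> cosets_k n k"
    note rp = coset_rep_prop[OF c]
    have "(\<Sum>w\<in>{w. w \<in> perms n \<and> restrict w {..<k} = c}. Gk w * Mw w)
        = (\<Sum>w\<in>{w. w \<in> perms n \<and> restrict w {..<k} = c}. Gk (coset_rep n k c) * Mw w)"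
    proof (rule sum.cong[OF refl])
      fix w assume "w \<in> {w. w \<in> perms n \<and> restrict w {..<k} = c}"
      then have w: "w \<in> perms n" and rw: "restrict w {..<k} = c" by auto
      have "\<And>j. j < k \<Longrightarrow> w j = coset_rep n k c j"
      proof -
        fix j assume "j < k"
        then show "w j = coset_rep n k c j"
          using fun_cong[OF rw, of j] fun_cong[OF conjunct2[OF rp], of j] by simp
      qed
      then show "Gk w * Mw w = Gk (coset_rep n k c) * Mw w" using Gk_eq[OF w conjunct1[OF rp]] by simp
    qed
    also have "\<dots> = Gk (coset_rep n k c) * v_m (n - k) t"
      unfolding sum_distrib_left[symmetric] Mw_def using fiber_sum[OF kn' roots c, of t] by simp
    finally show "(\<Sum>w\<in>{w. w \<in> perms n \<and> restrict w {..<k} = c}. Gk w * Mw w) = Gk (coset_rep n k c) * v_m (n - k) t" .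
  qed
  finally have R2: "R_poly lam t y = (\<Sum>c\<in>cosets_k n k. Gk (coset_rep n k c)) * v_m (n - k) t"
    using R by (simp add: sum_distrib_right)
  have vnz': "v_m (n - k) t \<noteq> 0" using vnz vl unfolding lam_def k_def by simp
  have P: "P_poly lam t y = (\<Sum>c\<in>cosets_k n k. Gk (coset_rep n k c))"
    unfolding P_poly_def R2 vl using vnz' by simp
  have G: "gysin_partial n k F y = (\<Sum>c\<in>cosets_k n k. Gk (coset_rep n k c))"
    unfolding gysin_partial_def Gk_def Let_def by simp
  show ?thesis using P G unfolding lam_def F_def k_def by simp
qed


end
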